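(* Let $B_k$ denote the Bernoulli numbers, defined by $\frac{X}{e^X-1}=\sum_{k\ge0}\frac{B_k}{k!}X^k$, and for $n\in\mathbb{N}$ let $L_n(X)=\dfrac{e^Xq^n}{1-e^Xq^n}$. Then for all $n\in\mathbb{N}$ \[ L_n(X)\,L_n(Y)=\sum_{k>0}\frac{B_k}{k!}(X-Y)^{k-1}L_n(X)+\sum_{k>0}\frac{B_k}{k!}(Y-X)^{k-1}L_n(Y)+\frac{L_n(X)-L_n(Y)}{X-Y}. \] *)

theory Defs
  imports "HOL-Analysis.Analysis" "HOL-Computational_Algebra.Formal_Power_Series"
begin

text \<open>Bernoulli numbers via the generating function X/(e^X - 1) = sum B_k/k! X^k
  (so B_1 = -1/2).\<close>
definition bernoulli_num :: "nat \<Rightarrow> 'a::field_char_0" where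
  "bernoulli_num k = fact k * fps_nth (fps_X / (fps_exp 1 - 1)) k"

definition Lfun :: "complex \<Rightarrow> nat \<Rightarrow> complex \<Rightarrow> complex" where
  "Lfun q n x = exp x * q ^ n / (1 - exp x * q ^ n)"

end

theory Submission
  imports Defs "HOL-Complex_Analysis.Complex_Analysis"
begin

lemma exp_ne_1_small:
  fixes w :: complex
  assumes "w \<noteq> 0" "cmod w < 2 * pi"
  shows "exp w \<noteq> 1"
proof
  assume "exp w = 1"
  then obtain n :: int where re: "Re w = 0" and im: "Im w = of_int (2 * n) * pi"
    by (auto simp: exp_eq_1)
  have "n \<noteq> 0" using assms(1) re im by (auto simp: complex_eq_iff)
  hence "\<bar>real_of_int n\<bar> \<ge> 1" by linarith
  have "cmod w = \<bar>Im w\<bar>" using re by (simp add: cmod_def)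
  also have "\<dots> = 2 * pi * \<bar>real_of_int n\<bar>" using im by (simp add: abs_mult)
  also have "\<dots> \<ge> 2 * pi" using \<open>\<bar>real_of_int n\<bar> \<ge> 1\<close> by simp
  finally show False using assms(2) by simp
qed

lemma bern_sums:
  fixes z :: complex
  assumes z: "z \<noteq> 0" "cmod z < 2 * pi"
  shows "(\<lambda>k. bernoulli_num (Suc k) / fact (Suc k) * z ^ k) sums (1 / (exp z - 1) - 1 / z)"
proof -
  define D :: "complex fps" where "D = fps_exp 1 - 1"
  define E where "E = fps_shift 1 D"
  define G :: "complex fps" where "G = fps_X / (fps_exp 1 - 1)"
  have D1: "D $ 1 = 1" by (simp add: D_def)
  have "D \<noteq> 0" using D1 by auto
  moreover have "D $ 0 = 0" by (simp add: D_def)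
  ultimately have sd: "1 \<le> subdegree D"
    using subdegree_eq_0_iff[of D] by linarith
  have DE: "D = E * fps_X" unfolding E_def using fps_shift_times_fps_X[OF sd] by simp
  have E0: "E $ 0 = 1" using D1 by (simp add: E_def)
  have GE: "G = inverse E"
  proof -
    have "G = fps_X / (fps_X * E)" by (simp add: G_def D_def[symmetric] DE mult.commute)
    also have "\<dots> = fps_X / fps_X / E" by (rule fps_divide_by_mult) simp
    also have "\<dots> = 1 / E" by simp
    also have "\<dots> = inverse E" using E0 by (simp add: fps_divide_unit)
    finally show ?thesis .
  qed
  have radD: "fps_conv_radius D = \<infinity>"
  proof -
    have "min (fps_conv_radius (fps_exp (1::complex))) (fps_conv_radius (1::complex fps)) \<le> fps_conv_radius D"
      unfolding D_def by (rule fps_conv_radius_diff)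
    thus ?thesis by simp
  qed
  have radE: "fps_conv_radius E = \<infinity>" using radD by (simp add: E_def)
  have evE: "eval_fps E w = (if w = 0 then 1 else (exp w - 1) / w)" for w
  proof -
    have "eval_fps E w = (if w = 0 then D $ 1 else eval_fps D w / w ^ 1)"
      unfolding E_def by (rule eval_fps_shift) (use sd radD in auto)
    also have "eval_fps D w = exp w - 1"
      unfolding D_def by (subst eval_fps_diff) auto
    finally show ?thesis using D1 by simp
  qed
  have nz: "eval_fps E w \<noteq> 0" if "ereal (norm w) < ereal (2 * pi)" for w
    using exp_ne_1_small[of w] that by (auto simp: evE)
  have radG: "fps_conv_radius (inverse E) \<ge> min (ereal (2*pi)) (fps_conv_radius E)"
    by (rule fps_conv_radius_inverse) (use nz in auto)
  hence radG': "ereal (norm z) < fps_conv_radius G" using z radE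
  proof -
    have "ereal (norm z) < ereal (2*pi)" using z by simp
    moreover have "ereal (2*pi) \<le> fps_conv_radius G" using radG radE by (simp add: GE)
    ultimately show ?thesis by (rule less_le_trans)
  qed
  have evG: "eval_fps G z = inverse (eval_fps E z)"
    unfolding GE by (rule eval_fps_inverse[where r="ereal (2*pi)"]) (use nz z radE in auto)
  hence evG': "eval_fps G z = z / (exp z - 1)" using z by (simp add: evE)
  have "(\<lambda>n. G $ n * z ^ n) sums eval_fps G z" by (rule sums_eval_fps) (use radG' in simp)
  hence "(\<lambda>n. G $ Suc n * z ^ Suc n) sums (eval_fps G z - G $ 0 * z ^ 0)"
    using sums_Suc_iff[of "\<lambda>n. G $ n * z ^ n"] by simp
  hence "(\<lambda>n. G $ Suc n * z ^ Suc n / z) sums ((eval_fps G z - 1) / z)"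
    using E0 by (intro sums_divide) (simp add: GE)
  moreover have "(\<lambda>n. G $ Suc n * z ^ Suc n / z) = (\<lambda>k. bernoulli_num (Suc k) / fact (Suc k) * z ^ k)"
    using z by (intro ext) (simp add: bernoulli_num_def G_def del: fact_Suc)
  moreover have "(eval_fps G z - 1) / z = 1 / (exp z - 1) - 1 / z"
    using z exp_ne_1_small[OF z] by (simp add: evG' field_simps)
  ultimately show ?thesis by simp
qed

lemma key_alg:
  fixes z e b :: complex
  assumes h: "z \<noteq> 0" "e \<noteq> 0" "e - 1 \<noteq> 0" "1 - e * b \<noteq> 0" "1 - b \<noteq> 0"
  shows "(e * b) / (1 - e * b) * (b / (1 - b)) =
      (1 / (e - 1) - 1 / z) * ((e * b) / (1 - e * b))
    + (1 / (1 / e - 1) - 1 / (- z)) * (b / (1 - b))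
    + ((e * b) / (1 - e * b) - b / (1 - b)) / z"
proof -
  have i: "1 / (1/e - 1) = e / (1 - e)" using h by (simp add: field_simps)
  have "1 - e \<noteq> 0" using h by auto
  show ?thesis unfolding i using h \<open>1 - e \<noteq> 0\<close>
    apply (simp add: divide_simps)
    apply algebra
    done
qed

theorem lemma3p1:
  fixes q X Y :: complex and n :: nat
  assumes "exp X * q ^ n \<noteq> 1" and "exp Y * q ^ n \<noteq> 1"
    and "X \<noteq> Y" and "cmod (X - Y) < 2 * pi"
  shows "Lfun q n X * Lfun q n Y =
      (\<Sum>k. bernoulli_num (Suc k) / fact (Suc k) * (X - Y) ^ k) * Lfun q n X
    + (\<Sum>k. bernoulli_num (Suc k) / fact (Suc k) * (Y - X) ^ k) * Lfun q n Y
    + (Lfun q n X - Lfun q n Y) / (X - Y)"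
proof -
  define z where "z = X - Y"
  have z: "z \<noteq> 0" "cmod z < 2 * pi" using assms by (auto simp: z_def)
  have mz: "- z \<noteq> 0" "cmod (- z) < 2 * pi" using z by auto
  have YX: "Y - X = - z" by (simp add: z_def)
  have s1: "(\<Sum>k. bernoulli_num (Suc k) / fact (Suc k) * (X - Y) ^ k) = 1 / (exp z - 1) - 1 / z"
    using sums_unique[OF bern_sums[OF z]] by (simp add: z_def)
  have s2: "(\<Sum>k. bernoulli_num (Suc k) / fact (Suc k) * (Y - X) ^ k) = 1 / (exp (- z) - 1) - 1 / (- z)"
    using sums_unique[OF bern_sums[OF mz]] by (simp add: YX)
  define b where "b = exp Y * q ^ n"
  have ez: "exp z \<noteq> 1" by (rule exp_ne_1_small[OF z])
  have ab: "exp X * q ^ n = exp z * b" by (simp add: b_def z_def exp_diff)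
  have emz: "exp (- z) = 1 / exp z" by (simp add: exp_minus field_simps)
  have e0: "exp z \<noteq> 0" by simp
  have a1: "1 - exp z * b \<noteq> 0" using assms(1) ab by auto
  have b1: "1 - b \<noteq> 0" using assms(2) b_def by auto
  have key: "(exp z * b) / (1 - exp z * b) * (b / (1 - b)) =
      (1 / (exp z - 1) - 1 / z) * ((exp z * b) / (1 - exp z * b))
    + (1 / (1 / exp z - 1) - 1 / (- z)) * (b / (1 - b))
    + ((exp z * b) / (1 - exp z * b) - b / (1 - b)) / z"
  proof -
    have e1: "exp z - 1 \<noteq> 0" "1 - exp z \<noteq> 0" using ez by auto
    show ?thesis using z(1) e0 e1 a1 b1 by (intro key_alg) auto
  qed
  have XY: "X - Y = z" by (simp add: z_def)
  show ?thesis unfolding s1 s2 unfolding Lfun_def ab emz XY b_def[symmetric] using key by simp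
qed

end
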